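(* Let $(G,H,\mathcal{L})$ be a cut-and-project scheme with $G=\mathbb{R}^d$ such that $\mathcal{L}$ and $\mathcal{L}^\circ$ are both countable. Let $D$ be a lattice in $\mathbb{R}^d$ with $D\cap\pi^G(\mathcal{L})=\{0\}$ and $D^\circ\cap\pi^{\widehat G}(\mathcal{L}^\circ)=\{0\}$, let $\mathbb{K}=\mathbb{R}^d/D$ with quotient map $\psi$, let $H'=H\times\mathbb{K}$, let $\phi:\pi^G(\mathcal{L})\to H'$, $\phi(x)=(x^\star,\psi(x))$, and let $\mathcal{L}'=\{(x,\phi(x)):x\in\pi^G(\mathcal{L})\}$. Then: (a) $(G,H',\mathcal{L}')$ is a cut-and-project scheme whose $\star$-map is $\phi$, and $\phi$ is injective; (b) for every $W\subseteq H$ we have $\Lambda_W=\Lambda'_{W'}$, where $W'=W\times\mathbb{K}$; (c) if $H$ is $\sigma$-compact (resp. metrisable), then so is $H'$.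
   Context: A cut-and-project scheme $(G,H,\mathcal{L})$ consists of locally compact abelian groups $G,H$ and a discrete cocompact subgroup $\mathcal{L}\subseteq G\times H$ such that $\pi^G|_{\mathcal{L}}$ is injective and $\pi^H(\mathcal{L})$ is dense in $H$. The $\star$-map on $\pi^G(\mathcal{L})$ is $x^\star=\pi^H((\pi^G|_{\mathcal{L}})^{-1}(x))$. $\Lambda_W=\pi^G(\mathcal{L}\cap(G\times W))$ and $\Lambda'_{W'}=\pi^G(\mathcal{L}'\cap(G\times W'))$. The dual group $\widehat G$ is identified with $\mathbb{R}^d$ via $x\mapsto(y\mapsto e^{2\pi i\langle x,y\rangle})$; $\mathcal{L}^\circ\subseteq\widehat G\times\widehat H$ is the annihilator of $\mathcal L$ and $\pi^{\widehat G}$ the projection to $\widehat G$. For a lattice $D$, $D^\circ=\{x\in\mathbb{R}^d:\langle y,x\rangle\in\mathbb{Z}\ \forall y\in D\}$. *)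

theory Defs
  imports "HOL-Analysis.Analysis"
begin

definition lca_group :: "'a::{ab_group_add, topological_space} itself \<Rightarrow> bool" where
  "lca_group _ \<longleftrightarrow>
     continuous_on UNIV (\<lambda>p::'a \<times> 'a. fst p + snd p) \<and>
     continuous_on UNIV (uminus :: 'a \<Rightarrow> 'a) \<and>
     Hausdorff_space (euclidean :: 'a topology) \<and>
     locally_compact_space (euclidean :: 'a topology)"

definition add_subgroup :: "'a::ab_group_add set \<Rightarrow> bool" where
  "add_subgroup S \<longleftrightarrow> 0 \<in> S \<and> (\<forall>x\<in>S. \<forall>y\<in>S. x + y \<in> S) \<and> (\<forall>x\<in>S. - x \<in> S)"

definition discrete_set :: "'a::topological_space set \<Rightarrow> bool" where
  "discrete_set S \<longleftrightarrow> (\<forall>z\<in>S. \<exists>U. open U \<and> U \<inter> S = {z})"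

text \<open>Cocompact: the quotient is compact, i.e. some compact set meets every coset.\<close>
definition cocompact :: "'a::{ab_group_add, topological_space} set \<Rightarrow> bool" where
  "cocompact S \<longleftrightarrow> (\<exists>K. compact K \<and> {k + s | k s. k \<in> K \<and> s \<in> S} = UNIV)"

definition cut_and_project ::
  "('g::{ab_group_add, topological_space} \<times> 'h::{ab_group_add, topological_space}) set \<Rightarrow> bool" where
  "cut_and_project L \<longleftrightarrow>
     lca_group TYPE('g) \<and> lca_group TYPE('h) \<and>
     add_subgroup L \<and> discrete_set L \<and> cocompact L \<and>
     inj_on fst L \<and> closure (snd ` L) = UNIV"

definition star_map :: "('g \<times> 'h) set \<Rightarrow> 'g \<Rightarrow> 'h" where
  "star_map L x = snd (THE z. z \<in> L \<and> fst z = x)"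

definition model_set :: "('g \<times> 'h) set \<Rightarrow> 'h set \<Rightarrow> 'g set" where
  "model_set L W = fst ` (L \<inter> (UNIV \<times> W))"

definition characters :: "('h::{ab_group_add, topological_space} \<Rightarrow> complex) set" where
  "characters = {f. continuous_on UNIV f \<and> (\<forall>h. norm (f h) = 1) \<and>
                    (\<forall>a b. f (a + b) = f a * f b)}"

text \<open>Annihilator of L in dual(G) x dual(H), with dual(G) = R^d via
  xi maps to (y maps to exp(2 pi i <xi,y>)).\<close>
definition annihilator ::
  "((real^'n) \<times> 'h::{ab_group_add, topological_space}) set \<Rightarrow> ((real^'n) \<times> ('h \<Rightarrow> complex)) set" where
  "annihilator L = {(\<xi>, f). f \<in> characters \<and>
      (\<forall>(x, h) \<in> L. cis (2 * pi * (\<xi> \<bullet> x)) * f h = 1)}"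

definition lattice :: "(real^'n) set \<Rightarrow> bool" where
  "lattice D \<longleftrightarrow> (\<exists>M :: real^'n^'n. invertible M \<and>
      D = {M *v (\<chi> i. of_int (c i)) | c :: 'n \<Rightarrow> int. True})"

definition dual_lattice :: "(real^'n) set \<Rightarrow> (real^'n) set" where
  "dual_lattice D = {x. \<forall>y\<in>D. y \<bullet> x \<in> \<int>}"

text \<open>\<psi> realises 'k as the topological quotient group R^d / D.\<close>
definition quotient_map_by :: "(real^'n) set \<Rightarrow> (real^'n \<Rightarrow> 'k::{ab_group_add, topological_space}) \<Rightarrow> bool" where
  "quotient_map_by D \<psi> \<longleftrightarrow>
     (\<forall>x y. \<psi> (x + y) = \<psi> x + \<psi> y) \<and> surj \<psi> \<and> {x. \<psi> x = 0} = D \<and>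
     continuous_on UNIV \<psi> \<and> (\<forall>U. open U \<longrightarrow> open (\<psi> ` U))"

definition sigma_compact_type :: "'a::topological_space itself \<Rightarrow> bool" where
  "sigma_compact_type _ \<longleftrightarrow> (\<exists>F::'a set set. countable F \<and> (\<forall>K\<in>F. compact K) \<and> \<Union>F = UNIV)"

definition metrisable_type :: "'a::topological_space itself \<Rightarrow> bool" where
  "metrisable_type _ \<longleftrightarrow> metrizable_space (euclidean :: 'a topology)"

end

theory Submission
  imports Defs
begin


lemma sg_0: "add_subgroup B \<Longrightarrow> 0 \<in> B" by (simp add: add_subgroup_def)
lemma sg_add: "add_subgroup B \<Longrightarrow> x \<in> B \<Longrightarrow> y \<in> B \<Longrightarrow> x + y \<in> B" by (simp add: add_subgroup_def)
lemma sg_neg: "add_subgroup B \<Longrightarrow> x \<in> B \<Longrightarrow> - x \<in> B" by (simp add: add_subgroup_def)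
lemma sg_diff: "add_subgroup B \<Longrightarrow> x \<in> B \<Longrightarrow> y \<in> B \<Longrightarrow> x - y \<in> B"
  using sg_add[of B x "-y"] sg_neg[of B y] by simp

lemma sg_nat:
  fixes B :: "'a::real_vector set"
  assumes "add_subgroup B" "b \<in> B" shows "of_nat k *\<^sub>R b \<in> B"
proof (induction k)
  case 0 then show ?case using sg_0[OF assms(1)] by simp
next
  case (Suc k)
  have "of_nat (Suc k) *\<^sub>R b = b + of_nat k *\<^sub>R b" by (simp add: algebra_simps)
  then show ?case using sg_add[OF assms(1) assms(2) Suc] by simp
qed

lemma sg_int:
  fixes B :: "'a::real_vector set"
  assumes "add_subgroup B" "b \<in> B" shows "of_int k *\<^sub>R b \<in> B"
proof (cases "k \<ge> 0")
  case True
  then obtain n where "k = int n" using nonneg_int_cases by blast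
  then show ?thesis using sg_nat[OF assms, of n] by simp
next
  case False
  define n where "n = nat (-k)"
  have "k = - int n" using False by (simp add: n_def)
  then show ?thesis using sg_neg[OF assms(1) sg_nat[OF assms, of n]] by simp
qed

lemma sg_sum:
  assumes "add_subgroup B" "finite I" "\<And>i. i \<in> I \<Longrightarrow> f i \<in> B" shows "sum f I \<in> B"
  using assms(2,3)
proof (induction I rule: finite_induct)
  case empty then show ?case using sg_0[OF assms(1)] by simp
next
  case (insert x F) then show ?case using sg_add[OF assms(1)] by simp
qed

lemma finite_range_not_inj:
  fixes f :: "nat \<Rightarrow> 'b"
  assumes "finite (range f)" shows "\<exists>k1 k2. k1 < k2 \<and> f k1 = f k2"
proof -
  have "\<not> inj f" using assms range_inj_infinite by blast
  then obtain a b where "a \<noteq> b" "f a = f b" unfolding inj_def by blast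
  then show ?thesis
  proof (cases "a < b")
    case True then show ?thesis using \<open>f a = f b\<close> by blast
  next
    case False then have "b < a" using \<open>a \<noteq> b\<close> by simp
    then show ?thesis using \<open>f a = f b\<close> by metis
  qed
qed

lemma key_nonspan: fixes B :: "'a::euclidean_space set" assumes "span B \<noteq> UNIV" shows "\<exists>\<xi>. \<xi> \<noteq> 0 \<and> (\<forall>b\<in>B. \<xi> \<bullet> b \<in> \<int>)"
proof -
  have "dim B < DIM('a)" using assms dim_eq_full[of B] dim_subset_UNIV[of B] by simp
  from orthogonal_to_subspace_exists[OF this] obtain x where xx: "x \<noteq> 0" "\<And>y. y \<in> span B \<Longrightarrow> orthogonal x y"
    by metis
  have "x \<bullet> b \<in> \<int>" if "b \<in> B" for b
  proof -
    have "orthogonal x b" using xx(2) span_base[OF that] by blast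
    then show ?thesis by (simp add: orthogonal_def)
  qed
  then show ?thesis using xx(1) by blast
qed

lemma key_span:
  fixes B :: "'a::euclidean_space set"
  assumes cl: "closed B" and sg: "add_subgroup B" and ne: "B \<noteq> UNIV" and spanB: "span B = UNIV"
  shows "\<exists>\<xi>. \<xi> \<noteq> 0 \<and> (\<forall>b\<in>B. \<xi> \<bullet> b \<in> \<int>)"
proof -
  define V where "V = {v. \<forall>t::real. t *\<^sub>R v \<in> B}"
  have VB: "V \<subseteq> B"
  proof
    fix v assume "v \<in> V"
    then have "1 *\<^sub>R v \<in> B" unfolding V_def by blast
    then show "v \<in> B" by simp
  qed
  have subV: "subspace V"
  proof -
    have "0 \<in> V" unfolding V_def using sg_0[OF sg] by simp
    moreover have "x + y \<in> V" if "x \<in> V" "y \<in> V" for x y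
      using that sg_add[OF sg] unfolding V_def by (simp add: scaleR_right_distrib)
    moreover have "c *\<^sub>R x \<in> V" if "x \<in> V" for c x
      using that unfolding V_def by simp
    ultimately show ?thesis unfolding subspace_def by blast
  qed
  obtain S where S: "S \<subseteq> V" "independent S" "V \<subseteq> span S" "card S = dim V"
    by (rule basis_exists)
  have SB: "S \<subseteq> B" using S VB by blast
  obtain \<beta> where \<beta>: "S \<subseteq> \<beta>" "\<beta> \<subseteq> B" "independent \<beta>" "B \<subseteq> span \<beta>"
    by (rule maximal_independent_subset_extend[OF SB S(2)])
  have span\<beta>: "span \<beta> = UNIV"
    proof -
    have "span B \<subseteq> span \<beta>" by (rule span_minimal[OF \<beta>(4) subspace_span])
    then show ?thesis using spanB by blast
  qed
  have fin\<beta>: "finite \<beta>" using \<beta>(3) independent_imp_finite by blast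
  define W where "W = \<beta> - S"
  have finW: "finite W" using fin\<beta> W_def by simp
  define rep where "rep y w = representation \<beta> y w" for y w
  have rep_add: "rep (x + y) w = rep x w + rep y w" for x y w
    unfolding rep_def using representation_add[OF \<beta>(3), of y x] span\<beta> by simp
  have rep_scale: "rep (c *\<^sub>R x) w = c * rep x w" for c x w
    unfolding rep_def using representation_scale[OF \<beta>(3), of x c] span\<beta> by simp
  have rep_basis: "rep b w = (if w = b then 1 else 0)" if "b \<in> \<beta>" for b w
    unfolding rep_def using representation_basis[OF \<beta>(3) that] by simp
  have lin_rep: "linear (\<lambda>y. rep y w)" for w
    by (rule linearI) (simp_all add: rep_add rep_scale)
  have rep_sum: "rep (\<Sum>i\<in>I. f i) w = (\<Sum>i\<in>I. rep (f i) w)" if "finite I" for I f w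
    using linear_sum[OF lin_rep] .
  have expand: "y = (\<Sum>b\<in>\<beta>. rep y b *\<^sub>R b)" for y
    unfolding rep_def using sum_representation_eq[OF \<beta>(3), of y \<beta>] span\<beta> fin\<beta> by simp
  define P where "P y = (\<Sum>w\<in>W. rep y w *\<^sub>R w)" for y
  have linP: "linear P" unfolding P_def
    by (rule linearI) (simp_all add: rep_add rep_scale scaleR_add_left sum.distrib scaleR_sum_right)
  have rep_comb: "rep (\<Sum>w\<in>W. c w *\<^sub>R w) w' = (if w' \<in> W then c w' else 0)" for c w'
  proof -
    have "rep (\<Sum>w\<in>W. c w *\<^sub>R w) w' = (\<Sum>w\<in>W. c w * (if w' = w then 1 else 0))"
      using finW by (simp add: rep_sum rep_scale rep_basis W_def)
    also have "\<dots> = (if w' \<in> W then c w' else 0)"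
      using finW by (simp add: if_distrib[of "\<lambda>x. _ * x"] sum.delta cong: if_cong)
    finally show ?thesis .
  qed
  have repP: "rep (P y) w = (if w \<in> W then rep y w else 0)" for y w
    unfolding P_def by (rule rep_comb)
  have PP: "P (P y) = P y" for y
  proof -
    have "(\<Sum>w\<in>W. rep (P y) w *\<^sub>R w) = (\<Sum>w\<in>W. rep y w *\<^sub>R w)"
      by (rule sum.cong) (simp_all add: repP)
    then show ?thesis by (simp add: P_def)
  qed
  have PW: "P w = w" if "w \<in> W" for w
    unfolding P_def using that finW W_def
    by (simp add: rep_basis if_distrib[of "\<lambda>x. x *\<^sub>R _"] sum.delta cong: if_cong)
  have P_S: "P v = 0" if "v \<in> span S" for v
  proof (rule linear_eq_0_on_span[OF linP _ that])
    fix x assume "x \<in> S"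
    then show "P x = 0" unfolding P_def using \<beta>(1) W_def
      by (intro sum.neutral) (auto simp: rep_basis)
  qed
  have P_decomp: "P y = y - (\<Sum>v\<in>S. rep y v *\<^sub>R v)" for y
  proof -
    have "S \<subseteq> \<beta>" "W = \<beta> - S" by (fact \<beta>(1)) (fact W_def)
    then have "(\<Sum>b\<in>\<beta>. rep y b *\<^sub>R b) = (\<Sum>v\<in>S. rep y v *\<^sub>R v) + P y"
      unfolding P_def using fin\<beta> sum.subset_diff[of S \<beta>] by (simp add: add.commute)
    then show ?thesis using expand[of y] by (simp add: algebra_simps)
  qed
  have PB: "P b \<in> B" if "b \<in> B" for b
  proof -
    have "rep b v *\<^sub>R v \<in> V" if "v \<in> S" for v
      using that S(1) subV subspace_scale[of V v] by blast
    then have "(\<Sum>v\<in>S. rep b v *\<^sub>R v) \<in> B"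
      using VB fin\<beta> \<beta>(1) by (intro sg_sum[OF sg]) (auto intro: finite_subset)
    then show ?thesis using P_decomp[of b] sg_diff[OF sg \<open>b \<in> B\<close>] by simp
  qed
  have Wne: "W \<noteq> {}"
  proof
    assume "W = {}"
    then have "\<beta> \<subseteq> S" using W_def by blast
    then have "span \<beta> \<subseteq> V" using S(1) subV span_minimal by blast
    then show False using span\<beta> VB ne by blast
  qed
  then obtain w1 where w1: "w1 \<in> W" by blast

  have blP: "bounded_linear P" using linP linear_conv_bounded_linear by blast
  have rep_diff: "rep (x - y) w = rep x w - rep y w" for x y w
  proof -
    have "x - y = x + (-1) *\<^sub>R y" by simp
    then show ?thesis by (simp only: rep_add rep_scale)
  qed
  have disc: "\<exists>\<epsilon>>0. \<forall>b\<in>B. P b \<noteq> 0 \<longrightarrow> \<epsilon> \<le> norm (P b)"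
  proof (rule ccontr)
    assume H: "\<not> ?thesis"
    have "\<exists>b. b \<in> B \<and> P b \<noteq> 0 \<and> norm (P b) < 1 / Suc k" for k :: nat
    proof -
      have pos: "1 / real (Suc k) > 0" by simp
      then have "\<not> (\<forall>b\<in>B. P b \<noteq> 0 \<longrightarrow> 1 / real (Suc k) \<le> norm (P b))" using H by blast
      then show ?thesis by (auto simp: not_le)
    qed
    then obtain g where g: "\<And>k. g k \<in> B" "\<And>k. P (g k) \<noteq> 0" "\<And>k. norm (P (g k)) < 1 / Suc k"
      by metis
    define lam where "lam k = P (g k)" for k
    define u where "u k = lam k /\<^sub>R norm (lam k)" for k
    have lam0: "lam k \<noteq> 0" for k using g(2) lam_def by simp
    have u_sph: "u k \<in> sphere 0 1" for k using lam0[of k] by (simp add: u_def)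
    have "\<exists>l\<in>sphere 0 1. \<exists>r. strict_mono r \<and> (u \<circ> r) \<longlonglongrightarrow> l"
      using compact_imp_seq_compact[OF compact_sphere[of "0::'a" 1]] u_sph unfolding seq_compact_def by blast
    then obtain l r where l: "l \<in> sphere 0 1" "strict_mono r" "(u \<circ> r) \<longlonglongrightarrow> l" by blast
    have Pu: "P (u k) = u k" for k
      unfolding u_def lam_def using linear_scale[OF linP] PP by simp
    have "(\<lambda>k. P (u (r k))) \<longlonglongrightarrow> P l"
      using isCont_tendsto_compose[OF linear_continuous_at[OF blP], of "\<lambda>k. u (r k)" l sequentially] l(3)
      by (simp add: o_def)
    then have "(\<lambda>k. u (r k)) \<longlonglongrightarrow> P l" by (simp add: Pu)
    moreover have "(\<lambda>k. u (r k)) \<longlonglongrightarrow> l" using l(3) by (simp add: o_def)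
    ultimately have Pl: "P l = l" using LIMSEQ_unique by blast
    have lV: "l \<in> V" unfolding V_def
    proof (intro CollectI allI)
      fix t :: real
      show "t *\<^sub>R l \<in> B"
      proof (subst closed_approachable[OF cl, symmetric], intro allI impI)
        fix \<delta> :: real assume \<delta>: "\<delta> > 0"
        define e where "e = \<delta> / (2 * (\<bar>t\<bar> + 1))"
        have e: "e > 0" using \<delta> by (simp add: e_def)
        have "\<forall>\<^sub>F k in sequentially. dist ((u \<circ> r) k) l < e" using tendstoD[OF l(3) e] .
        then obtain M where M: "\<And>k. k \<ge> M \<Longrightarrow> dist (u (r k)) l < e"
          by (auto simp: eventually_sequentially)
        obtain N0 :: nat where N0: "N0 > 0" "inverse (real N0) < \<delta> / 2"
          using ex_inverse_of_nat_less[of "\<delta>/2"] \<delta> by auto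
        define k where "k = max M N0"
        have dk: "dist (u (r k)) l < e" using M k_def by simp
        have "k \<le> r k" using seq_suble[OF l(2)] .
        define n where "n = norm (lam (r k))"
        have npos: "n > 0" using lam0 n_def by simp
        have "n < 1 / real (Suc (r k))" using g(3) n_def lam_def by simp
        also have "\<dots> \<le> 1 / real N0"
          using \<open>k \<le> r k\<close> N0(1) k_def by (simp add: frac_le)
        also have "\<dots> < \<delta> / 2" using N0(2) by (simp add: inverse_eq_divide)
        finally have n\<delta>: "n < \<delta> / 2" .
        define z where "z = of_int \<lfloor>t / n\<rfloor> *\<^sub>R lam (r k)"
        have zB: "z \<in> B" unfolding z_def lam_def by (rule sg_int[OF sg PB[OF g(1)]])
        have tu: "t *\<^sub>R u (r k) = (t / n) *\<^sub>R lam (r k)" by (simp add: u_def n_def divide_inverse)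
        have "norm (z - t *\<^sub>R u (r k)) = \<bar>of_int \<lfloor>t / n\<rfloor> - t / n\<bar> * n"
          unfolding tu z_def n_def by (simp flip: scaleR_diff_left)
        also have "\<dots> \<le> 1 * n"
        proof (rule mult_right_mono)
          have "of_int \<lfloor>t / n\<rfloor> \<le> t / n" "t / n < of_int \<lfloor>t / n\<rfloor> + 1" by linarith+
          then show "\<bar>of_int \<lfloor>t / n\<rfloor> - t / n\<bar> \<le> 1" by linarith
        qed (use npos in simp)
        finally have d1: "norm (z - t *\<^sub>R u (r k)) < \<delta> / 2" using n\<delta> by simp
        have "norm (t *\<^sub>R u (r k) - t *\<^sub>R l) = \<bar>t\<bar> * dist (u (r k)) l"
          by (simp add: dist_norm flip: scaleR_diff_right)
        also have "\<dots> \<le> \<bar>t\<bar> * e" using dk by (simp add: mult_left_mono)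
        also have "\<dots> \<le> \<delta> / 2"
        proof -
          have "\<bar>t\<bar> * e = (\<bar>t\<bar> / (\<bar>t\<bar> + 1)) * (\<delta> / 2)" by (simp add: e_def)
          also have "\<dots> \<le> 1 * (\<delta> / 2)" using \<delta> by (intro mult_right_mono) auto
          finally show ?thesis by simp
        qed
        finally have d2: "norm (t *\<^sub>R u (r k) - t *\<^sub>R l) \<le> \<delta> / 2" .
        have "dist z (t *\<^sub>R l) \<le> norm (z - t *\<^sub>R u (r k)) + norm (t *\<^sub>R u (r k) - t *\<^sub>R l)"
          by (metis dist_norm norm_triangle_ineq diff_add_cancel add_diff_eq)
        then have "dist z (t *\<^sub>R l) < \<delta>" using d1 d2 by simp
        then show "\<exists>y\<in>B. dist y (t *\<^sub>R l) < \<delta>" using zB by blast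
      qed
    qed
    then have "P l = 0" using S(3) P_S by blast
    then show False using Pl l(1) by simp
  qed
  then obtain \<epsilon> where \<epsilon>: "\<epsilon> > 0" "\<And>b. b \<in> B \<Longrightarrow> P b \<noteq> 0 \<Longrightarrow> \<epsilon> \<le> norm (P b)" by blast

  define F where "F = {y \<in> P ` B. \<forall>w\<in>W. 0 \<le> rep y w \<and> rep y w < 1}"
  have bF: "bounded F" unfolding bounded_iff
  proof (intro exI ballI)
    fix y assume "y \<in> F"
    then obtain b where yb: "y = P b" "\<forall>w\<in>W. 0 \<le> rep y w \<and> rep y w < 1" unfolding F_def by blast
    have "P y = y" using PP[of b] yb(1) by simp
    then have "norm y = norm (\<Sum>w\<in>W. rep y w *\<^sub>R w)" unfolding P_def by simp
    also have "\<dots> \<le> (\<Sum>w\<in>W. norm (rep y w *\<^sub>R w))" by (rule norm_sum)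
    also have "\<dots> \<le> (\<Sum>w\<in>W. norm w)"
    proof (rule sum_mono)
      fix w assume "w \<in> W"
      then have "\<bar>rep y w\<bar> \<le> 1" using yb(2) by force
      then show "norm (rep y w *\<^sub>R w) \<le> norm w"
        by (simp add: mult_left_le_one_le)
    qed
    finally show "norm y \<le> (\<Sum>w\<in>W. norm w)" .
  qed
  have finF: "finite F"
  proof (rule ccontr)
    assume "infinite F"
    then obtain x where "x islimpt F" by (rule bounded_infinite_imp_islimpt[OF subset_refl bF])
    then obtain y1 where y1: "y1 \<in> F" "y1 \<noteq> x" "dist y1 x < \<epsilon> / 2"
    proof -
      have "\<epsilon> / 2 > 0" using \<epsilon>(1) by simp
      then show ?thesis using \<open>x islimpt F\<close> that unfolding islimpt_approachable by blast
    qed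
    have "min (\<epsilon>/2) (dist y1 x) > 0" using y1(2) \<epsilon>(1) by simp
    then obtain y2 where y2: "y2 \<in> F" "y2 \<noteq> x" "dist y2 x < min (\<epsilon>/2) (dist y1 x)"
      using \<open>x islimpt F\<close> unfolding islimpt_approachable by blast
    have ne12: "y1 \<noteq> y2"
    proof
      assume "y1 = y2" then show False using y2(3) by simp
    qed
    obtain b1 where b1: "b1 \<in> B" "y1 = P b1" using y1(1) unfolding F_def by blast
    obtain b2 where b2: "b2 \<in> B" "y2 = P b2" using y2(1) unfolding F_def by blast
    have Pd: "P (b1 - b2) = y1 - y2" unfolding b1(2) b2(2) by (rule linear_diff[OF linP])
    have "b1 - b2 \<in> B" using sg_diff[OF sg b1(1) b2(1)] .
    moreover have "P (b1 - b2) \<noteq> 0" using Pd ne12 by simp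
    ultimately have "\<epsilon> \<le> norm (P (b1 - b2))" by (rule \<epsilon>(2))
    then have "\<epsilon> \<le> norm (y1 - y2)" using Pd by simp
    moreover have "norm (y1 - y2) \<le> dist y1 x + dist y2 x"
      using dist_triangle2[of y1 y2 x] by (simp add: dist_norm)
    ultimately show False using y1(3) y2(3) by simp
  qed
  have W\<beta>: "W \<subseteq> \<beta>" using W_def by blast
  have rep_combW: "rep (\<Sum>w\<in>W. c w *\<^sub>R w) w' = c w'" if "w' \<in> W" for c w'
    using rep_comb[of c w'] that by simp
  define \<Phi> where "\<Phi> = (\<lambda>b. frac (rep b w1)) ` B"
  have \<Phi>sub: "\<Phi> \<subseteq> (\<lambda>y. rep y w1) ` F"
  proof
    fix \<phi> assume "\<phi> \<in> \<Phi>"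
    then obtain b where b: "b \<in> B" "\<phi> = frac (rep b w1)" unfolding \<Phi>_def by blast
    define b' where "b' = b - (\<Sum>w\<in>W. of_int \<lfloor>rep b w\<rfloor> *\<^sub>R w)"
    have "(\<Sum>w\<in>W. of_int \<lfloor>rep b w\<rfloor> *\<^sub>R w) \<in> B"
      using finW W\<beta> \<beta>(2) by (intro sg_sum[OF sg] sg_int[OF sg]) auto
    then have b'B: "b' \<in> B" unfolding b'_def using sg_diff[OF sg b(1)] by blast
    have repb': "rep (P b') w = frac (rep b w)" if "w \<in> W" for w
      using that unfolding b'_def repP
      by (simp add: rep_diff rep_combW frac_def)
    have "P b' \<in> F" unfolding F_def using b'B repb' by (auto simp: frac_lt_1)
    then show "\<phi> \<in> (\<lambda>y. rep y w1) ` F" using repb'[OF w1] b(2) by force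
  qed
  have fin\<Phi>: "finite \<Phi>" using finite_subset[OF \<Phi>sub] finF by blast
  have dex: "\<exists>d::nat. d > 0 \<and> real d * \<phi> \<in> \<int>" if "\<phi> \<in> \<Phi>" for \<phi>
  proof -
    obtain b where b: "b \<in> B" "\<phi> = frac (rep b w1)" using \<open>\<phi> \<in> \<Phi>\<close> unfolding \<Phi>_def by blast
    define c where "c = rep b w1"
    define f where "f k = frac (real k * c)" for k :: nat
    have "range f \<subseteq> \<Phi>"
    proof
      fix x assume "x \<in> range f"
      then obtain k where "x = f k" by blast
      moreover have "f k = frac (rep (of_nat k *\<^sub>R b) w1)" by (simp add: f_def c_def rep_scale)
      moreover have "of_nat k *\<^sub>R b \<in> B" by (rule sg_nat[OF sg b(1)])
      ultimately show "x \<in> \<Phi>" unfolding \<Phi>_def by blast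
    qed
    then have "finite (range f)" using fin\<Phi> finite_subset by blast
    then obtain k1 k2 where k: "k1 < k2" "f k1 = f k2" using finite_range_not_inj by blast
    define d where "d = k2 - k1"
    have dpos: "d > 0" using k(1) d_def by simp
    have "real d * c = real k2 * c - real k1 * c" using k(1) by (simp add: d_def of_nat_diff left_diff_distrib)
    also have "\<dots> = of_int \<lfloor>real k2 * c\<rfloor> - of_int \<lfloor>real k1 * c\<rfloor>"
      using k(2) unfolding f_def frac_def by linarith
    finally have "real d * c \<in> \<int>" by simp
    moreover have "real d * of_int \<lfloor>c\<rfloor> \<in> \<int>" by (intro Ints_mult Ints_of_nat Ints_of_int)
    ultimately have "real d * c - real d * of_int \<lfloor>c\<rfloor> \<in> \<int>" by (rule Ints_diff)
    then have "real d * \<phi> \<in> \<int>" using b(2) by (simp add: c_def frac_def right_diff_distrib)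
    then show ?thesis using dpos by blast
  qed
  then have "\<forall>\<phi>\<in>\<Phi>. \<exists>d::nat. d > 0 \<and> real d * \<phi> \<in> \<int>" by blast
  then obtain d where d0: "\<forall>\<phi>\<in>\<Phi>. d \<phi> > 0 \<and> real (d \<phi>) * \<phi> \<in> \<int>"
    by (rule bchoice[elim_format]) blast
  then have d: "\<And>\<phi>. \<phi> \<in> \<Phi> \<Longrightarrow> d \<phi> > 0 \<and> real (d \<phi>) * \<phi> \<in> \<int>" by blast
  define N where "N = (\<Prod>\<phi>\<in>\<Phi>. d \<phi>)"
  have Npos: "N > 0" unfolding N_def using d by (simp add: prod_pos)
  have Nint: "real N * rep b w1 \<in> \<int>" if "b \<in> B" for b
  proof -
    define \<phi> where "\<phi> = frac (rep b w1)"
    have \<phi>: "\<phi> \<in> \<Phi>" unfolding \<Phi>_def \<phi>_def using that by blast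
    have "N = d \<phi> * (\<Prod>x\<in>\<Phi> - {\<phi>}. d x)" unfolding N_def using prod.remove[OF fin\<Phi> \<phi>] .
    then have "real N * \<phi> = real (\<Prod>x\<in>\<Phi> - {\<phi>}. d x) * (real (d \<phi>) * \<phi>)" by simp
    also have "\<dots> \<in> \<int>" using d[OF \<phi>] Ints_of_nat by (blast intro: Ints_mult)
    finally have "real N * \<phi> \<in> \<int>" .
    moreover have "rep b w1 = of_int \<lfloor>rep b w1\<rfloor> + \<phi>" by (simp add: \<phi>_def frac_def)
    have "real N * rep b w1 = real N * of_int \<lfloor>rep b w1\<rfloor> + real N * \<phi>"
      by (simp add: \<phi>_def frac_def algebra_simps)
    moreover have "real N * of_int \<lfloor>rep b w1\<rfloor> \<in> \<int>" by (intro Ints_mult) auto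
    ultimately show ?thesis using \<open>real N * \<phi> \<in> \<int>\<close> by (metis Ints_add)
  qed
  define l where "l y = real N * rep y w1" for y
  have linl: "linear l" unfolding l_def by (rule linearI) (simp_all add: rep_add rep_scale algebra_simps)
  define \<xi> where "\<xi> = (\<Sum>i\<in>Basis. l i *\<^sub>R i)"
  have \<xi>y: "\<xi> \<bullet> y = l y" for y
  proof -
    have "l y = l (\<Sum>i\<in>Basis. (y \<bullet> i) *\<^sub>R i)" by (simp add: euclidean_representation)
    also have "\<dots> = (\<Sum>i\<in>Basis. (y \<bullet> i) * l i)" by (simp add: linear_sum[OF linl] linear_scale[OF linl])
    also have "\<dots> = \<xi> \<bullet> y" unfolding \<xi>_def inner_sum_left inner_scaleR_left
      by (rule sum.cong) (simp_all add: inner_commute mult.commute)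
    finally show ?thesis by simp
  qed
  have "\<xi> \<bullet> w1 = real N" using \<xi>y[of w1] w1 W\<beta> by (simp add: l_def rep_basis subset_iff)
  then have "\<xi> \<noteq> 0" using Npos by auto
  moreover have "\<forall>b\<in>B. \<xi> \<bullet> b \<in> \<int>" using Nint \<xi>y l_def by simp
  ultimately show ?thesis by blast
qed

lemma key_dual:
  fixes B :: "'a::euclidean_space set"
  assumes cl: "closed B" and sg: "add_subgroup B" and ne: "B \<noteq> UNIV"
  shows "\<exists>\<xi>. \<xi> \<noteq> 0 \<and> (\<forall>b\<in>B. \<xi> \<bullet> b \<in> \<int>)"
  using key_span[OF assms] key_nonspan by blast



lemma cis_2pi_eq_1_iff: "cis (2 * pi * a) = 1 \<longleftrightarrow> a \<in> \<int>"
proof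
  assume "cis (2 * pi * a) = 1"
  then have "exp (\<i> * complex_of_real (2 * pi * a)) = 1" by (simp add: cis_conv_exp)
  then obtain n where "Im (\<i> * complex_of_real (2 * pi * a)) = real_of_int (2 * n) * pi"
    unfolding exp_eq_1 by blast
  then have "2 * pi * a = 2 * pi * of_int n" by simp
  then have "a = of_int n" by simp
  then show "a \<in> \<int>" by simp
next
  assume "a \<in> \<int>" then show "cis (2 * pi * a) = 1" by (rule cis_multiple_2pi)
qed

lemma cis_2pi_eq_iff: "cis (2 * pi * a) = cis (2 * pi * b) \<longleftrightarrow> a - b \<in> \<int>"
proof -
  have "cis (2 * pi * a) = cis (2 * pi * b) * cis (2 * pi * (a - b))"
    by (simp add: cis_mult algebra_simps)
  moreover have "cis (2 * pi * b) \<noteq> 0" by (metis cis_neq_zero)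
  ultimately have "cis (2 * pi * a) = cis (2 * pi * b) \<longleftrightarrow> cis (2 * pi * (a - b)) = 1"
    by (metis mult_cancel_left1)
  then show ?thesis by (simp add: cis_2pi_eq_1_iff)
qed

lemma quot_cont:
  fixes q :: "'a::topological_space \<Rightarrow> 'b::topological_space" and g :: "'b \<Rightarrow> 'c::topological_space"
  assumes "continuous_on UNIV (g \<circ> q)" "surj q" "\<And>U. open U \<Longrightarrow> open (q ` U)"
  shows "continuous_on UNIV g"
  unfolding continuous_on_open_vimage[OF open_UNIV]
proof (intro allI impI)
  fix B :: "'c set" assume "open B"
  have "open ((g \<circ> q) -` B)" using open_vimage[OF \<open>open B\<close> assms(1)] .
  then have "open (q ` ((g \<circ> q) -` B))" by (rule assms(3))
  moreover have "q ` ((g \<circ> q) -` B) = g -` B \<inter> UNIV"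
    using assms(2) by (auto simp: surj_def) (metis UNIV_I comp_apply image_eqI vimage_eq)
  ultimately show "open (g -` B \<inter> UNIV)" by simp
qed

lemma open_map_prod:
  fixes q :: "'a::topological_space \<Rightarrow> 'b::topological_space"
    and q' :: "'c::topological_space \<Rightarrow> 'd::topological_space"
  assumes "\<And>U. open U \<Longrightarrow> open (q ` U)" "\<And>U. open U \<Longrightarrow> open (q' ` U)" "open U"
  shows "open ((\<lambda>p. (q (fst p), q' (snd p))) ` U)"
proof (subst open_subopen, intro ballI)
  fix z assume "z \<in> (\<lambda>p. (q (fst p), q' (snd p))) ` U"
  then obtain p where p: "p \<in> U" "z = (q (fst p), q' (snd p))" by blast
  from open_prod_elim[OF assms(3) p(1)] obtain A B where AB: "open A" "open B" "p \<in> A \<times> B" "A \<times> B \<subseteq> U" by metis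
  show "\<exists>T. open T \<and> z \<in> T \<and> T \<subseteq> (\<lambda>p. (q (fst p), q' (snd p))) ` U"
  proof (intro exI conjI)
    show "open (q ` A \<times> q' ` B)" using assms(1,2) AB by (simp add: open_Times)
    show "z \<in> q ` A \<times> q' ` B" using p AB by (auto simp: mem_Times_iff)
    show "q ` A \<times> q' ` B \<subseteq> (\<lambda>p. (q (fst p), q' (snd p))) ` U"
    proof
      fix w assume "w \<in> q ` A \<times> q' ` B"
      then obtain a b where "a \<in> A" "b \<in> B" "w = (q a, q' b)" by blast
      then show "w \<in> (\<lambda>p. (q (fst p), q' (snd p))) ` U" using AB(4) by (auto intro!: image_eqI[of _ _ "(a, b)"])
    qed
  qed
qed

context
  fixes D :: "(real^'n) set" and \<psi> :: "real^'n \<Rightarrow> 'k::{ab_group_add, topological_space}"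
  assumes latD: "lattice D" and psi: "quotient_map_by D \<psi>"
begin

lemma psi_add: "\<psi> (x + y) = \<psi> x + \<psi> y" using psi by (simp add: quotient_map_by_def)
lemma psi_surj: "surj \<psi>" using psi by (simp add: quotient_map_by_def)
lemma psi_ker: "\<psi> x = 0 \<longleftrightarrow> x \<in> D" using psi unfolding quotient_map_by_def by blast
lemma psi_cont: "continuous_on UNIV \<psi>" using psi by (simp add: quotient_map_by_def)
lemma psi_open: "open U \<Longrightarrow> open (\<psi> ` U)" using psi by (simp add: quotient_map_by_def)
lemma psi_0: "\<psi> 0 = 0" using psi_add[of 0 0] by simp
lemma psi_neg: "\<psi> (- x) = - \<psi> x" using psi_add[of x "-x"] psi_0 by (simp add: add_eq_0_iff)
lemma psi_diff: "\<psi> (x - y) = \<psi> x - \<psi> y" using psi_add[of x "-y"] psi_neg[of y] by simp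
lemma psi_eq: "\<psi> x = \<psi> y \<longleftrightarrow> x - y \<in> D" using psi_ker[of "x - y"] psi_diff[of x y] by simp

lemma lattice_matrix_ex:
  "\<exists>M Mi :: real^'n^'n. M ** Mi = mat 1 \<and> Mi ** M = mat 1 \<and>
    D = {x. \<forall>i. (Mi *v x) $ i \<in> \<int>} \<and> (\<forall>x. x = M *v (Mi *v x))"
proof -
  obtain M :: "real^'n^'n" where M: "invertible M" "D = {M *v (\<chi> i. of_int (c i)) | c :: 'n \<Rightarrow> int. True}"
    using latD unfolding lattice_def by blast
  obtain Mi where Mi: "M ** Mi = mat 1" "Mi ** M = mat 1" using M(1) unfolding invertible_def by blast
  have inv1: "M *v (Mi *v x) = x" for x using Mi(1) by (simp add: matrix_vector_mul_assoc)
  have inv2: "Mi *v (M *v x) = x" for x using Mi(2) by (simp add: matrix_vector_mul_assoc)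
  have "D = {x. \<forall>i. (Mi *v x) $ i \<in> \<int>}"
  proof (intro set_eqI iffI)
    fix x assume "x \<in> D"
    then obtain c :: "'n \<Rightarrow> int" where "x = M *v (\<chi> i. of_int (c i))" using M(2) by blast
    then show "x \<in> {x. \<forall>i. (Mi *v x) $ i \<in> \<int>}" by (simp add: inv2)
  next
    fix x assume "x \<in> {x. \<forall>i. (Mi *v x) $ i \<in> \<int>}"
    then have hx: "\<And>i. (Mi *v x) $ i \<in> \<int>" by blast
    define c where "c i = \<lfloor>(Mi *v x) $ i\<rfloor>" for i
    have "(\<chi> i. (of_int (c i) :: real)) = Mi *v x"
      by (simp add: vec_eq_iff c_def of_int_floor[OF hx])
    then have "x = M *v (\<chi> i. of_int (c i))" by (simp add: inv1)
    then show "x \<in> D" using M(2) by blast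
  qed
  then show ?thesis using Mi inv1 by metis
qed

lemma lattice_closed: "closed D"
proof -
  obtain M Mi :: "real^'n^'n" where MM: "M ** Mi = mat 1" "Mi ** M = mat 1"
    "D = {x. \<forall>i. (Mi *v x) $ i \<in> \<int>}" "\<And>x. x = M *v (Mi *v x)"
    using lattice_matrix_ex by blast
  have "D = (\<Inter>i. (\<lambda>x. (Mi *v x) $ i) -` \<int>)" using MM(3) by auto
  moreover have "closed ((\<lambda>x. (Mi *v x) $ i) -` \<int>)" for i
  proof (rule continuous_closed_vimage)
    show "closed (\<int> :: real set)" by simp
    show "isCont (\<lambda>x. (Mi *v x) $ i) x" for x
      by (rule linear_continuous_at[OF bounded_linear_compose[OF bounded_linear_vec_nth matrix_vector_mul_bounded_linear]])
  qed
  ultimately show ?thesis by auto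
qed

lemma torus_compact: "compact (UNIV :: 'k set)"
proof -
  obtain M Mi :: "real^'n^'n" where MM: "M ** Mi = mat 1" "Mi ** M = mat 1"
    "D = {x. \<forall>i. (Mi *v x) $ i \<in> \<int>}" "\<And>x. x = M *v (Mi *v x)"
    using lattice_matrix_ex by blast
  have "UNIV \<subseteq> \<psi> ` ((\<lambda>v. M *v v) ` cbox 0 1)"
  proof
    fix t :: 'k
    obtain x where x: "t = \<psi> x" using psi_surj by (metis surjD)
    define v where "v = Mi *v x"
    define fl :: "real^'n" where "fl = (\<chi> i. of_int \<lfloor>v $ i\<rfloor>)"
    define fr where "fr = v - fl"
    have "fr \<in> cbox 0 1" unfolding mem_box_cart fr_def fl_def
      by (simp add: frac_ge_0 less_imp_le[OF frac_lt_1] flip: frac_def)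
    have "M *v fl \<in> D" unfolding MM(3) using MM(2)
      by (simp add: matrix_vector_mul_assoc fl_def)
    have "x = M *v fr + M *v fl" using MM(4)[of x]
      by (simp add: fr_def v_def flip: matrix_vector_right_distrib)
    then have "\<psi> x = \<psi> (M *v fr)" using psi_add psi_ker \<open>M *v fl \<in> D\<close> by simp
    then show "t \<in> \<psi> ` ((\<lambda>v. M *v v) ` cbox 0 1)" using x \<open>fr \<in> cbox 0 1\<close> by blast
  qed
  moreover have "compact (\<psi> ` ((\<lambda>v. M *v v) ` cbox 0 1))"
  proof (rule compact_continuous_image)
    show "continuous_on ((*v) M ` cbox 0 1) \<psi>" using psi_cont continuous_on_subset by blast
    show "compact ((*v) M ` cbox 0 1)"
      by (rule compact_continuous_image[OF linear_continuous_on[OF matrix_vector_mul_bounded_linear] compact_cbox])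
  qed
  ultimately show ?thesis by (metis top.extremum_uniqueI)
qed


lemma torus_add_cont: "continuous_on UNIV (\<lambda>p::'k \<times> 'k. fst p + snd p)"
proof (rule quot_cont[where q = "\<lambda>p::(real^'n) \<times> (real^'n). (\<psi> (fst p), \<psi> (snd p))"])
  have "continuous_on UNIV (\<lambda>p::(real^'n) \<times> (real^'n). \<psi> (fst p + snd p))"
  proof (rule continuous_on_compose2[OF psi_cont])
    show "continuous_on UNIV (\<lambda>x::(real^'n) \<times> (real^'n). fst x + snd x)"
      by (intro continuous_intros)
  qed auto
  then show "continuous_on UNIV ((\<lambda>p::'k \<times> 'k. fst p + snd p) \<circ> (\<lambda>p. (\<psi> (fst p), \<psi> (snd p))))"
    by (simp add: o_def psi_add)
  show "surj (\<lambda>p::(real^'n) \<times> (real^'n). (\<psi> (fst p), \<psi> (snd p)))"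
  proof -
    have "(a, b) \<in> range (\<lambda>p::(real^'n) \<times> (real^'n). (\<psi> (fst p), \<psi> (snd p)))" for a b
    proof -
      obtain x y where "a = \<psi> x" "b = \<psi> y" using psi_surj by (metis surjD)
      then show ?thesis by (auto intro!: image_eqI[of _ _ "(x, y)"])
    qed
    then show ?thesis by auto
  qed
  show "open ((\<lambda>p::(real^'n) \<times> (real^'n). (\<psi> (fst p), \<psi> (snd p))) ` U)" if "open U" for U
    using open_map_prod[OF psi_open psi_open that] .
qed

lemma torus_neg_cont: "continuous_on UNIV (uminus :: 'k \<Rightarrow> 'k)"
proof (rule quot_cont[where q = \<psi>])
  have "continuous_on UNIV (\<lambda>x. \<psi> (- x))"
    by (rule continuous_on_compose2[OF psi_cont]) (auto intro: continuous_on_minus continuous_on_id)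
  then show "continuous_on UNIV (uminus \<circ> \<psi>)" by (simp add: o_def psi_neg)
qed (use psi_surj psi_open in auto)

lemma torus_hausdorff: "Hausdorff_space (euclidean :: 'k topology)"
  unfolding Hausdorff_space_def topspace_euclidean
proof (intro allI impI)
  fix s t :: 'k assume st: "s \<in> UNIV \<and> t \<in> UNIV \<and> s \<noteq> t"
  obtain a b where ab: "s = \<psi> a" "t = \<psi> b" using psi_surj by (metis surjD)
  have "a - b \<notin> D" using st ab psi_eq by auto
  then have "a - b \<in> - D" by simp
  moreover have "open (- D)" using lattice_closed by (simp add: open_Compl)
  ultimately obtain e where e: "e > 0" "ball (a - b) e \<subseteq> - D" using open_contains_ball by blast
  define r where "r = e / 2"
  have r: "r > 0" using e by (simp add: r_def)
  show "\<exists>U V. openin euclidean U \<and> openin euclidean V \<and> s \<in> U \<and> t \<in> V \<and> disjnt U V"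
  proof (intro exI conjI)
    show "openin euclidean (\<psi> ` ball a r)" "openin euclidean (\<psi> ` ball b r)"
      using psi_open by (simp_all flip: open_openin)
    show "s \<in> \<psi> ` ball a r" "t \<in> \<psi> ` ball b r" using ab r by auto
    show "disjnt (\<psi> ` ball a r) (\<psi> ` ball b r)"
      unfolding disjnt_iff
    proof (intro allI notI)
      fix z assume "z \<in> \<psi> ` ball a r \<and> z \<in> \<psi> ` ball b r"
      then obtain u v where uv: "u \<in> ball a r" "v \<in> ball b r" "\<psi> u = \<psi> v" by auto
      then have "u - v \<in> D" using psi_eq by simp
      moreover have "dist (a - b) (u - v) < e"
      proof -
        have "dist (a - b) (u - v) = norm ((a - u) - (b - v))"
          unfolding dist_norm by (rule arg_cong[where f=norm]) (simp add: algebra_simps)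
        also have "\<dots> \<le> norm (a - u) + norm (b - v)" by (rule norm_triangle_ineq4)
        finally have "dist (a - b) (u - v) \<le> dist a u + dist b v" by (simp add: dist_norm)
        also have "\<dots> < r + r" using uv by (intro add_strict_mono) (simp_all add: dist_commute)
        finally show ?thesis by (simp add: r_def)
      qed
      ultimately show False using e(2) by auto
    qed
  qed
qed

lemma torus_lca: "lca_group TYPE('k)"
  unfolding lca_group_def
proof (intro conjI)
  show "continuous_on UNIV (\<lambda>p::'k \<times> 'k. fst p + snd p)" by (rule torus_add_cont)
  show "continuous_on UNIV (uminus :: 'k \<Rightarrow> 'k)" by (rule torus_neg_cont)
  show "Hausdorff_space (euclidean :: 'k topology)" by (rule torus_hausdorff)
  have "compact_space (euclidean :: 'k topology)"
    unfolding compact_space_def topspace_euclidean compactin_euclidean_iff by (rule torus_compact)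
  then show "locally_compact_space (euclidean :: 'k topology)" by (rule compact_imp_locally_compact_space)
qed

lemma torus_compact_space: "compact_space (euclidean :: 'k topology)"
  unfolding compact_space_def topspace_euclidean compactin_euclidean_iff by (rule torus_compact)

lemma torus_metrizable: "metrizable_space (euclidean :: 'k topology)"
proof -
  obtain M Mi :: "real^'n^'n" where MM: "M ** Mi = mat 1" "Mi ** M = mat 1"
    "D = {x. \<forall>i. (Mi *v x) $ i \<in> \<int>}" "\<And>x. x = M *v (Mi *v x)"
    using lattice_matrix_ex by blast
  define E :: "real^'n \<Rightarrow> complex^'n" where "E x = (\<chi> i. cis (2 * pi * (Mi *v x) $ i))" for x
  have E_eq: "E x = E y \<longleftrightarrow> \<psi> x = \<psi> y" for x y
  proof -
    have "E x = E y \<longleftrightarrow> (\<forall>i. cis (2 * pi * (Mi *v x) $ i) = cis (2 * pi * (Mi *v y) $ i))"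
      by (simp add: E_def vec_eq_iff)
    also have "\<dots> \<longleftrightarrow> (\<forall>i. (Mi *v x) $ i - (Mi *v y) $ i \<in> \<int>)" by (simp add: cis_2pi_eq_iff)
    also have "\<dots> \<longleftrightarrow> x - y \<in> D" by (simp add: MM(3) matrix_vector_mult_diff_distrib)
    also have "\<dots> \<longleftrightarrow> \<psi> x = \<psi> y" using psi_eq by simp
    finally show ?thesis .
  qed
  define e where "e t = E (SOME x. \<psi> x = t)" for t
  have e_psi: "e (\<psi> x) = E x" for x
  proof -
    have "\<psi> (SOME y. \<psi> y = \<psi> x) = \<psi> x" by (rule someI) (rule refl)
    then show ?thesis unfolding e_def using E_eq by blast
  qed
  have contE: "continuous_on UNIV E" unfolding E_def
    by (intro continuous_on_vec_lambda continuous_on_cis continuous_on_mult continuous_on_const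
        continuous_on_of_real linear_continuous_on[OF bounded_linear_compose[OF bounded_linear_vec_nth matrix_vector_mul_bounded_linear]])
  have conte: "continuous_on UNIV e"
  proof (rule quot_cont[where q = \<psi>])
    show "continuous_on UNIV (e \<circ> \<psi>)" using contE by (simp add: o_def e_psi)
  qed (use psi_surj psi_open in auto)
  have inje: "inj e"
  proof (rule injI)
    fix s t assume "e s = e t"
    obtain a b where ab: "s = \<psi> a" "t = \<psi> b" using psi_surj by (metis surjD)
    then show "s = t" using \<open>e s = e t\<close> e_psi E_eq by simp
  qed
  have "homeomorphic_map euclidean (top_of_set (range e)) e"
  proof (rule continuous_imp_homeomorphic_map)
    show "continuous_map euclidean (top_of_set (range e)) e"
      unfolding continuous_map_in_subtopology continuous_map_iff_continuous2 using conte by auto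
    show "compact_space (euclidean :: 'k topology)" by (rule torus_compact_space)
    show "Hausdorff_space (top_of_set (range e))" by (intro Hausdorff_space_subtopology Hausdorff_space_euclidean)
    show "e ` topspace euclidean = topspace (top_of_set (range e))" by simp
    show "inj_on e (topspace euclidean)" using inje by simp
  qed
  then have "(euclidean :: 'k topology) homeomorphic_space (top_of_set (range e))"
    unfolding homeomorphic_space_def homeomorphic_map_maps by blast
  moreover have "metrizable_space (top_of_set (range e))"
    by (intro metrizable_space_subtopology metrizable_space_euclidean)
  ultimately show ?thesis using homeomorphic_metrizable_space by blast
qed

end


lemma closure_subgroup:
  fixes S :: "'a::{ab_group_add,topological_space} set"
  assumes addc: "continuous_on UNIV (\<lambda>p::'a\<times>'a. fst p + snd p)"
    and negc: "continuous_on UNIV (uminus :: 'a \<Rightarrow> 'a)" and sg: "add_subgroup S"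
  shows "add_subgroup (closure S)"
proof -
  have "0 \<in> closure S" using sg_0[OF sg] closure_subset by blast
  moreover have "(\<lambda>p. fst p + snd p) ` closure (S \<times> S) \<subseteq> closure S"
  proof (rule image_closure_subset)
    show "continuous_on (closure (S \<times> S)) (\<lambda>p. fst p + snd p)" using addc continuous_on_subset by blast
    show "(\<lambda>p. fst p + snd p) ` (S \<times> S) \<subseteq> closure S" using sg_add[OF sg] closure_subset by force
  qed simp
  then have "x + y \<in> closure S" if "x \<in> closure S" "y \<in> closure S" for x y
    using that by (force simp: closure_Times)
  moreover have "uminus ` closure S \<subseteq> closure S"
  proof (rule image_closure_subset)
    show "continuous_on (closure S) uminus" using negc continuous_on_subset by blast
    show "uminus ` S \<subseteq> closure S" using sg_neg[OF sg] closure_subset by force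
  qed simp
  ultimately show ?thesis unfolding add_subgroup_def by blast
qed

lemma lca_prod:
  assumes "lca_group TYPE('h::{ab_group_add,topological_space})" "lca_group TYPE('k::{ab_group_add,topological_space})"
  shows "lca_group TYPE('h \<times> 'k)"
proof -
  have ah: "continuous_on UNIV (\<lambda>p::'h\<times>'h. fst p + snd p)" and nh: "continuous_on UNIV (uminus :: 'h \<Rightarrow> 'h)"
    and hh: "Hausdorff_space (euclidean :: 'h topology)" and lh: "locally_compact_space (euclidean :: 'h topology)"
    using assms(1) unfolding lca_group_def by auto
  have ak: "continuous_on UNIV (\<lambda>p::'k\<times>'k. fst p + snd p)" and nk: "continuous_on UNIV (uminus :: 'k \<Rightarrow> 'k)"
    and hk: "Hausdorff_space (euclidean :: 'k topology)" and lk: "locally_compact_space (euclidean :: 'k topology)"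
    using assms(2) unfolding lca_group_def by auto
  have c1: "continuous_on UNIV (\<lambda>p::('h\<times>'k)\<times>('h\<times>'k). fst (fst p) + fst (snd p))"
  proof (rule continuous_on_compose2[OF ah, where f = "\<lambda>p::('h\<times>'k)\<times>('h\<times>'k). (fst (fst p), fst (snd p))", simplified])
    show "continuous_on UNIV (\<lambda>p::('h\<times>'k)\<times>('h\<times>'k). (fst (fst p), fst (snd p)))" by (intro continuous_intros)
  qed
  have c2: "continuous_on UNIV (\<lambda>p::('h\<times>'k)\<times>('h\<times>'k). snd (fst p) + snd (snd p))"
  proof (rule continuous_on_compose2[OF ak, where f = "\<lambda>p::('h\<times>'k)\<times>('h\<times>'k). (snd (fst p), snd (snd p))", simplified])
    show "continuous_on UNIV (\<lambda>p::('h\<times>'k)\<times>('h\<times>'k). (snd (fst p), snd (snd p)))" by (intro continuous_intros)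
  qed
  have "continuous_on UNIV (\<lambda>p::('h\<times>'k)\<times>('h\<times>'k). (fst (fst p) + fst (snd p), snd (fst p) + snd (snd p)))"
    using c1 c2 by (rule continuous_on_Pair)
  then have add: "continuous_on UNIV (\<lambda>p::('h\<times>'k)\<times>('h\<times>'k). fst p + snd p)"
    by (simp add: plus_prod_def case_prod_beta)
  have n1: "continuous_on UNIV (\<lambda>p::'h\<times>'k. - fst p)"
    by (rule continuous_on_compose2[OF nh, where f = fst, simplified]) (intro continuous_intros)
  have n2: "continuous_on UNIV (\<lambda>p::'h\<times>'k. - snd p)"
    by (rule continuous_on_compose2[OF nk, where f = snd, simplified]) (intro continuous_intros)
  have "continuous_on UNIV (\<lambda>p::'h\<times>'k. (- fst p, - snd p))" using n1 n2 by (rule continuous_on_Pair)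
  then have neg: "continuous_on UNIV (uminus :: 'h \<times> 'k \<Rightarrow> 'h \<times> 'k)"
    by (simp add: uminus_prod_def case_prod_beta)
  have "Hausdorff_space (prod_topology (euclidean :: 'h topology) (euclidean :: 'k topology))"
    using hh hk Hausdorff_space_prod_topology by blast
  then have H: "Hausdorff_space (euclidean :: ('h \<times> 'k) topology)" by simp
  have "locally_compact_space (prod_topology (euclidean :: 'h topology) (euclidean :: 'k topology))"
    using lh lk locally_compact_space_prod_topology by blast
  then have LC: "locally_compact_space (euclidean :: ('h \<times> 'k) topology)" by simp
  show ?thesis unfolding lca_group_def using add neg H LC by blast
qed


lemma sig_prod:
  assumes "sigma_compact_type TYPE('h::topological_space)" and cptK: "compact (UNIV :: 'k::topological_space set)"
  shows "sigma_compact_type TYPE('h \<times> 'k)"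
proof -
  have "\<exists>F::'h set set. countable F \<and> (\<forall>K\<in>F. compact K) \<and> \<Union>F = UNIV"
    using assms(1) unfolding sigma_compact_type_def .
  then obtain F :: "'h set set" where F: "countable F" "\<forall>K\<in>F. compact K" "\<Union>F = UNIV"
    by (elim exE conjE)
  define F' where "F' = (\<lambda>K. K \<times> (UNIV :: 'k set)) ` F"
  have "countable F'" unfolding F'_def using F(1) by (rule countable_image)
  moreover have "\<forall>K\<in>F'. compact K" unfolding F'_def using F(2) compact_Times[OF _ cptK] by blast
  moreover have "\<Union>F' = UNIV"
  proof -
    have "p \<in> \<Union>F'" for p :: "'h \<times> 'k"
    proof -
      have "fst p \<in> \<Union>F" using F(3) by simp
      then obtain K where "K \<in> F" "fst p \<in> K" by (rule UnionE)
      then have "p \<in> K \<times> UNIV" by (simp add: mem_Times_iff)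
      moreover have "K \<times> UNIV \<in> F'" unfolding F'_def using \<open>K \<in> F\<close> by blast
      ultimately show ?thesis by blast
    qed
    then show ?thesis by blast
  qed
  ultimately have "\<exists>F::('h \<times> 'k) set set. countable F \<and> (\<forall>K\<in>F. compact K) \<and> \<Union>F = UNIV" by blast
  then show ?thesis unfolding sigma_compact_type_def .
qed

theorem theorem6p5:
  fixes L :: "((real^'n) \<times> 'h::{ab_group_add, topological_space}) set"
    and D :: "(real^'n) set"
    and \<psi> :: "real^'n \<Rightarrow> 'k::{ab_group_add, topological_space}"
  assumes cps: "cut_and_project L"
    and cL: "countable L"
    and cLo: "countable (annihilator L)"
    and latD: "lattice D"
    and D1: "D \<inter> fst ` L = {0}"
    and D2: "dual_lattice D \<inter> fst ` annihilator L = {0}"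
    and psi: "quotient_map_by D \<psi>"
  defines "\<phi> \<equiv> (\<lambda>x. (star_map L x, \<psi> x))"
    and "L' \<equiv> {(x, (star_map L x, \<psi> x)) | x. x \<in> fst ` L}"
  shows "(cut_and_project L' \<and> (\<forall>x \<in> fst ` L'. star_map L' x = \<phi> x) \<and> inj_on \<phi> (fst ` L))
       \<and> (\<forall>W. model_set L W = model_set L' (W \<times> UNIV))
       \<and> (sigma_compact_type TYPE('h) \<longrightarrow> sigma_compact_type TYPE('h \<times> 'k))
       \<and> (metrisable_type TYPE('h) \<longrightarrow> metrisable_type TYPE('h \<times> 'k))"
proof -
  note \<phi>def = assms(8) and L'def = assms(9)
  have lcaG: "lca_group TYPE(real^'n)" and lcaH: "lca_group TYPE('h)" and sgL: "add_subgroup L"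
    and discL: "discrete_set L" and cocL: "cocompact L" and injL: "inj_on fst L"
    and denseL: "closure (snd ` L) = UNIV"
    using cps unfolding cut_and_project_def by auto
  have lcaK: "lca_group TYPE('k)" by (rule torus_lca[OF latD psi])
  have cptK: "compact (UNIV :: 'k set)" by (rule torus_compact[OF latD psi])
  have SL2: "star_map L x = h" if "(x, h) \<in> L" for x h
  proof -
    have "(THE z. z \<in> L \<and> fst z = x) = (x, h)"
    proof (rule the_equality)
      show "(x, h) \<in> L \<and> fst (x, h) = x" using that by simp
      fix z assume "z \<in> L \<and> fst z = x"
      then show "z = (x, h)" using injL that by (metis fst_conv inj_onD)
    qed
    then show ?thesis unfolding star_map_def by simp
  qed
  have SL1: "(x, star_map L x) \<in> L" if xL: "x \<in> fst ` L" for x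
  proof -
    obtain h where "(x, h) \<in> L" using xL by force
    then show ?thesis using SL2 by simp
  qed
  have sgFL: "add_subgroup (fst ` L)"
    unfolding add_subgroup_def
  proof (intro conjI ballI)
    show "0 \<in> fst ` L" using sg_0[OF sgL] by force
    fix x y assume "x \<in> fst ` L" "y \<in> fst ` L"
    then obtain a b where "(x, a) \<in> L" "(y, b) \<in> L" by force
    then show "x + y \<in> fst ` L" using sg_add[OF sgL] by force
  next
    fix x assume "x \<in> fst ` L"
    then obtain a where "(x, a) \<in> L" by force
    then show "- x \<in> fst ` L" using sg_neg[OF sgL] by force
  qed
  have S_add: "star_map L (x + y) = star_map L x + star_map L y" if "x \<in> fst ` L" "y \<in> fst ` L" for x y
    using SL2 sg_add[OF sgL SL1[OF that(1)] SL1[OF that(2)]] by simp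
  have S_neg: "star_map L (- x) = - star_map L x" if "x \<in> fst ` L" for x
    using SL2 sg_neg[OF sgL SL1[OF that]] by simp
  have S_0: "star_map L 0 = 0" using SL2[of 0 0] sg_0[OF sgL] by (simp add: zero_prod_def)
  have L'mem: "z \<in> L' \<longleftrightarrow> (\<exists>x\<in>fst ` L. z = (x, star_map L x, \<psi> x))" for z
    unfolding L'def by blast
  have fstL': "fst ` L' = fst ` L" unfolding L'def by force

  have sgL': "add_subgroup L'"
    unfolding add_subgroup_def
  proof (intro conjI ballI)
    show "0 \<in> L'" unfolding L'mem using sg_0[OF sgFL] S_0 psi_0[OF latD psi]
      by (auto simp: zero_prod_def intro!: bexI[of _ 0])
    fix z1 z2 assume "z1 \<in> L'" "z2 \<in> L'"
    then obtain x y where xy: "x \<in> fst ` L" "y \<in> fst ` L" "z1 = (x, star_map L x, \<psi> x)" "z2 = (y, star_map L y, \<psi> y)"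
      unfolding L'mem by blast
    then show "z1 + z2 \<in> L'" unfolding L'mem using sg_add[OF sgFL xy(1,2)] S_add[OF xy(1,2)] psi_add[OF latD psi]
      by (auto intro!: bexI[of _ "x + y"])
  next
    fix z assume "z \<in> L'"
    then obtain x where x: "x \<in> fst ` L" "z = (x, star_map L x, \<psi> x)" unfolding L'mem by blast
    then show "- z \<in> L'" unfolding L'mem using sg_neg[OF sgFL x(1)] S_neg[OF x(1)] psi_neg[OF latD psi]
      by (auto intro!: bexI[of _ "- x"])
  qed
  have discL': "discrete_set L'"
    unfolding discrete_set_def
  proof
    fix z assume "z \<in> L'"
    then obtain x where x: "x \<in> fst ` L" "z = (x, star_map L x, \<psi> x)" unfolding L'mem by blast
    obtain U where U: "open U" "U \<inter> L = {(x, star_map L x)}"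
      using discL SL1[OF x(1)] unfolding discrete_set_def by blast
    define U' where "U' = (\<lambda>p::(real^'n) \<times> ('h \<times> 'k). (fst p, fst (snd p))) -` U"
    have "open U'" unfolding U'_def by (rule open_vimage[OF U(1)]) (intro continuous_intros)
    moreover have "U' \<inter> L' = {z}"
    proof (intro set_eqI iffI)
      fix w assume "w \<in> U' \<inter> L'"
      then have wL: "w \<in> L'" and wU: "(fst w, fst (snd w)) \<in> U" unfolding U'_def by auto
      from wL obtain y where y: "y \<in> fst ` L" "w = (y, star_map L y, \<psi> y)" unfolding L'mem by blast
      then have "(y, star_map L y) \<in> U" using wU by simp
      then have "(y, star_map L y) \<in> U \<inter> L" using SL1[OF y(1)] by blast
      then have "y = x" using U(2) by blast
      then show "w \<in> {z}" using y x \<open>y = x\<close> by simp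
    next
      fix w assume "w \<in> {z}"
      then have wz: "w = z" by simp
      have "(x, star_map L x) \<in> U" using U(2) by blast
      then have "w \<in> U'" unfolding U'_def wz x(2) by simp
      moreover have "w \<in> L'" unfolding wz L'mem using x by blast
      ultimately show "w \<in> U' \<inter> L'" by blast
    qed
    ultimately show "\<exists>U. open U \<and> U \<inter> L' = {z}" by blast
  qed
  have cocL': "cocompact L'"
    unfolding cocompact_def
  proof -
    obtain K where K: "compact K" "{k + s | k s. k \<in> K \<and> s \<in> L} = UNIV"
      using cocL unfolding cocompact_def by blast
    define K' where "K' = (\<lambda>p::((real^'n) \<times> 'h) \<times> 'k. (fst (fst p), snd (fst p), snd p)) ` (K \<times> UNIV)"
    have "compact K'" unfolding K'_def
      by (intro compact_continuous_image compact_Times K(1) cptK continuous_intros)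
    moreover have "{k + s | k s. k \<in> K' \<and> s \<in> L'} = UNIV"
    proof (intro set_eqI iffI)
      fix z :: "(real^'n) \<times> 'h \<times> 'k"
      obtain g h t where z: "z = (g, h, t)" by (metis prod.collapse)
      have "(g, h) \<in> {k + s | k s. k \<in> K \<and> s \<in> L}" using K(2) by blast
      then obtain a b x y where ab: "(a, b) \<in> K" "(x, y) \<in> L" "(g, h) = (a, b) + (x, y)" by auto
      have y: "y = star_map L x" using SL2[OF ab(2)] by simp
      have xL: "x \<in> fst ` L" using ab(2) by force
      have "(a, b, t - \<psi> x) \<in> K'" unfolding K'_def using ab(1) by (force intro!: image_eqI[of _ _ "((a, b), t - \<psi> x)"])
      moreover have "(x, star_map L x, \<psi> x) \<in> L'" unfolding L'mem using xL by blast
      moreover have "z = (a, b, t - \<psi> x) + (x, star_map L x, \<psi> x)" using ab(3) y z by simp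
      ultimately show "z \<in> {k + s | k s. k \<in> K' \<and> s \<in> L'}" by blast
    qed simp
    ultimately show "\<exists>K. compact K \<and> {k + s | k s. k \<in> K \<and> s \<in> L'} = UNIV" by blast
  qed
  have injL': "inj_on fst L'" unfolding L'def by (auto intro!: inj_onI)
  have starL': "star_map L' x = \<phi> x" if "x \<in> fst ` L'" for x
  proof -
    have xL: "x \<in> fst ` L" using that fstL' by simp
    have "(THE z. z \<in> L' \<and> fst z = x) = (x, \<phi> x)"
    proof (rule the_equality)
      show "(x, \<phi> x) \<in> L' \<and> fst (x, \<phi> x) = x" unfolding L'mem \<phi>def using xL by auto
      fix z assume "z \<in> L' \<and> fst z = x"
      then show "z = (x, \<phi> x)" unfolding L'mem \<phi>def by auto
    qed
    then show ?thesis unfolding star_map_def by simp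
  qed
  have inj\<phi>: "inj_on \<phi> (fst ` L)"
  proof (rule inj_onI)
    fix x y assume xy: "x \<in> fst ` L" "y \<in> fst ` L" "\<phi> x = \<phi> y"
    then have "\<psi> x = \<psi> y" unfolding \<phi>def by simp
    then have "x - y \<in> D" using psi_eq[OF latD psi] by simp
    moreover have "x - y \<in> fst ` L" using sg_diff[OF sgFL xy(1,2)] .
    ultimately have "x - y = 0" using D1 by blast
    then show "x = y" by simp
  qed
  have model: "model_set L W = model_set L' (W \<times> UNIV)" for W
  proof (intro set_eqI iffI)
    fix x assume "x \<in> model_set L W"
    then obtain h where xh: "(x, h) \<in> L" "h \<in> W" unfolding model_set_def by auto
    have "(x, star_map L x, \<psi> x) \<in> L'" unfolding L'mem using xh(1) by force
    moreover have "star_map L x \<in> W" using SL2[OF xh(1)] xh(2) by simp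
    ultimately have "(x, star_map L x, \<psi> x) \<in> L' \<inter> (UNIV \<times> (W \<times> UNIV))" by simp
    then show "x \<in> model_set L' (W \<times> UNIV)" unfolding model_set_def by force
  next
    fix x assume "x \<in> model_set L' (W \<times> UNIV)"
    then obtain z where z: "z \<in> L'" "snd z \<in> W \<times> UNIV" "x = fst z" unfolding model_set_def by auto
    then obtain y where "y \<in> fst ` L" "z = (y, star_map L y, \<psi> y)" unfolding L'mem by blast
    then have "y \<in> fst ` L" "x = y" "star_map L y \<in> W" using z by auto
    then show "x \<in> model_set L W" unfolding model_set_def using SL1 by force
  qed

  have lcaHK: "lca_group TYPE('h \<times> 'k)" by (rule lca_prod[OF lcaH lcaK])
  have addHK: "continuous_on UNIV (\<lambda>p::('h\<times>'k)\<times>('h\<times>'k). fst p + snd p)"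
    and negHK: "continuous_on UNIV (uminus :: 'h\<times>'k \<Rightarrow> 'h\<times>'k)"
    using lcaHK unfolding lca_group_def by auto
  define SS where "SS = snd ` L'"
  have SSmem: "p \<in> SS \<longleftrightarrow> (\<exists>x\<in>fst ` L. p = (star_map L x, \<psi> x))" for p
    unfolding SS_def L'def by force
  have sgSS: "add_subgroup SS"
    unfolding add_subgroup_def SS_def
  proof (intro conjI ballI)
    show "0 \<in> snd ` L'" using sg_0[OF sgL'] by force
    fix p q assume "p \<in> snd ` L'" "q \<in> snd ` L'"
    then obtain z1 z2 where "z1 \<in> L'" "z2 \<in> L'" "p = snd z1" "q = snd z2" by blast
    then have "z1 + z2 \<in> L'" "p + q = snd (z1 + z2)" using sg_add[OF sgL'] by auto
    then show "p + q \<in> snd ` L'" by blast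
  next
    fix p assume "p \<in> snd ` L'"
    then obtain z where "z \<in> L'" "p = snd z" by blast
    then have "- z \<in> L'" "- p = snd (- z)" using sg_neg[OF sgL'] by auto
    then show "- p \<in> snd ` L'" by blast
  qed
  define C where "C = closure SS"
  have sgC: "add_subgroup C" unfolding C_def by (rule closure_subgroup[OF addHK negHK sgSS])
  have clC: "closed C" unfolding C_def by simp
  have SSC: "SS \<subseteq> C" unfolding C_def by (rule closure_subset)
  have cmfst: "closed (fst ` A)" if "closed A" for A :: "('h \<times> 'k) set"
  proof -
    have "closed_map (prod_topology (euclidean :: 'h topology) (euclidean :: 'k topology)) euclidean fst"
      by (rule closed_map_fst[OF torus_compact_space[OF latD psi]])
    then have "closed_map (euclidean :: ('h \<times> 'k) topology) (euclidean :: 'h topology) fst" by simp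
    then show ?thesis using that unfolding closed_map_def closed_closedin by blast
  qed
  have fstC: "fst ` C = UNIV"
  proof -
    have "snd ` L \<subseteq> fst ` C"
    proof
      fix h assume "h \<in> snd ` L"
      then obtain x where xh: "(x, h) \<in> L" by force
      then have "(star_map L x, \<psi> x) \<in> SS" unfolding SSmem by force
      then have "(h, \<psi> x) \<in> C" using SSC SL2[OF xh] by auto
      then show "h \<in> fst ` C" by force
    qed
    then have "closure (snd ` L) \<subseteq> closure (fst ` C)" by (rule closure_mono)
    also have "\<dots> = fst ` C" using cmfst[OF clC] by (simp add: closure_closed)
    finally show ?thesis using denseL by blast
  qed
  have chrex0: "\<exists>t. (h, t) \<in> C" for h
  proof -
    have "h \<in> fst ` C" using fstC by simp
    then obtain z where "z \<in> C" "h = fst z" by blast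
    then have "(h, snd z) \<in> C" by simp
    then show ?thesis by blast
  qed
  have fullC: "C = UNIV"
  proof (rule ccontr)
    assume Cne: "C \<noteq> UNIV"
    have "\<exists>t. (0, t) \<notin> C"
    proof (rule ccontr)
      assume "\<not> (\<exists>t. (0, t) \<notin> C)"
      then have all0: "(0, t) \<in> C" for t by blast
      have "p \<in> C" for p
      proof -
        obtain h t where p: "p = (h, t)" by (cases p)
        obtain t0 where "(h, t0) \<in> C" using chrex0 by blast
        then have "(h, t0) + (0, t - t0) \<in> C" using sg_add[OF sgC _ all0] by blast
        then show ?thesis using p by simp
      qed
      then show False using Cne by blast
    qed
    then obtain t1 where t1: "(0, t1) \<notin> C" by blast
    define B where "B = {y. (0::'h, \<psi> y) \<in> C}"
    have clB: "closed B"
    proof -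
      have "B = (\<lambda>y. (0::'h, \<psi> y)) -` C" unfolding B_def by auto
      moreover have "continuous_on UNIV (\<lambda>y. (0::'h, \<psi> y))"
        by (intro continuous_on_Pair continuous_on_const psi_cont[OF latD psi])
      ultimately show ?thesis using closed_vimage[OF clC] by simp
    qed
    have sgB: "add_subgroup B"
      unfolding add_subgroup_def B_def
    proof (intro conjI ballI)
      show "0 \<in> {y. (0::'h, \<psi> y) \<in> C}" using sg_0[OF sgC] psi_0[OF latD psi] by (simp add: zero_prod_def)
      fix x y assume "x \<in> {y. (0::'h, \<psi> y) \<in> C}" "y \<in> {y. (0::'h, \<psi> y) \<in> C}"
      then have "(0::'h, \<psi> x) + (0, \<psi> y) \<in> C" using sg_add[OF sgC] by blast
      then show "x + y \<in> {y. (0::'h, \<psi> y) \<in> C}" by (simp add: psi_add[OF latD psi])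
    next
      fix x assume "x \<in> {y. (0::'h, \<psi> y) \<in> C}"
      then have "- (0::'h, \<psi> x) \<in> C" using sg_neg[OF sgC] by blast
      then show "- x \<in> {y. (0::'h, \<psi> y) \<in> C}" by (simp add: psi_neg[OF latD psi])
    qed
    have neB: "B \<noteq> UNIV"
    proof -
      obtain y where "t1 = \<psi> y" using psi_surj[OF latD psi] by (metis surjD)
      then have "y \<notin> B" using t1 B_def by simp
      then show ?thesis by blast
    qed
    obtain \<xi> where \<xi>: "\<xi> \<noteq> 0" "\<And>b. b \<in> B \<Longrightarrow> \<xi> \<bullet> b \<in> \<int>"
      using key_dual[OF clB sgB neB] by blast
    have DB: "D \<subseteq> B"
    proof
      fix d assume "d \<in> D"
      then have "\<psi> d = 0" using psi_ker[OF latD psi] by simp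
      then show "d \<in> B" unfolding B_def using sg_0[OF sgC] by (simp add: zero_prod_def)
    qed
    have \<xi>dual: "\<xi> \<in> dual_lattice D"
      unfolding dual_lattice_def using \<xi>(2) DB by (auto simp: inner_commute)
    define \<theta> where "\<theta> t = cis (2 * pi * (\<xi> \<bullet> (SOME y. \<psi> y = t)))" for t
    have \<theta>\<psi>: "\<theta> (\<psi> y) = cis (2 * pi * (\<xi> \<bullet> y))" for y
    proof -
      define y' where "y' = (SOME y'. \<psi> y' = \<psi> y)"
      have "\<psi> y' = \<psi> y" unfolding y'_def by (rule someI) (rule refl)
      then have "y' - y \<in> D" using psi_eq[OF latD psi] by simp
      then have "\<xi> \<bullet> (y' - y) \<in> \<int>" using DB \<xi>(2) by blast
      then have "\<xi> \<bullet> y' - \<xi> \<bullet> y \<in> \<int>" by (simp add: inner_diff_right)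
      then show ?thesis unfolding \<theta>_def y'_def[symmetric] by (simp add: cis_2pi_eq_iff)
    qed
    have \<theta>cont: "continuous_on UNIV \<theta>"
    proof (rule quot_cont[where q = \<psi>])
      have "continuous_on UNIV (\<lambda>y::real^'n. cis (2 * pi * (\<xi> \<bullet> y)))"
        by (intro continuous_on_cis continuous_intros)
      then show "continuous_on UNIV (\<theta> \<circ> \<psi>)" by (simp add: o_def \<theta>\<psi>)
    qed (use psi_surj[OF latD psi] psi_open[OF latD psi] in auto)
    have \<theta>mult: "\<theta> (s + t) = \<theta> s * \<theta> t" for s t
    proof -
      obtain a b where ab: "s = \<psi> a" "t = \<psi> b" using psi_surj[OF latD psi] by (metis surjD)
      have "\<theta> (s + t) = \<theta> (\<psi> (a + b))" using ab psi_add[OF latD psi] by simp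
      also have "\<dots> = cis (2 * pi * (\<xi> \<bullet> a) + 2 * pi * (\<xi> \<bullet> b))" by (simp add: \<theta>\<psi> inner_add_right distrib_left)
      also have "\<dots> = \<theta> s * \<theta> t" by (simp add: ab \<theta>\<psi> cis_mult)
      finally show ?thesis .
    qed
    have \<theta>A: "\<theta> t = 1" if "(0, t) \<in> C" for t
    proof -
      obtain y where y: "t = \<psi> y" using psi_surj[OF latD psi] by (metis surjD)
      then have "y \<in> B" using that B_def by simp
      then show ?thesis using y \<theta>\<psi> \<xi>(2) cis_multiple_2pi by simp
    qed
    have \<theta>norm: "norm (\<theta> t) = 1" for t by (simp add: \<theta>_def)
    define chr where "chr h = \<theta> (SOME t. (h, t) \<in> C)" for h
    have chrC: "chr h = \<theta> t" if "(h, t) \<in> C" for h t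
    proof -
      define t' where "t' = (SOME t. (h, t) \<in> C)"
      have t': "(h, t') \<in> C" unfolding t'_def using that by (rule someI)
      have "(h, t') - (h, t) \<in> C" using sg_diff[OF sgC t' that] .
      then have "\<theta> (t' - t) = 1" using \<theta>A by simp
      then have "\<theta> t' = \<theta> t" using \<theta>mult[of "t' - t" t] by simp
      then show ?thesis unfolding chr_def t'_def[symmetric] .
    qed
    have chrex: "\<exists>t. (h, t) \<in> C" for h by (rule chrex0)
    have chrmult: "chr (a + b) = chr a * chr b" for a b
    proof -
      obtain s t where st: "(a, s) \<in> C" "(b, t) \<in> C" using chrex by blast
      then have "(a, s) + (b, t) \<in> C" using sg_add[OF sgC] by blast
      then have "chr (a + b) = \<theta> (s + t)" using chrC by simp
      then show ?thesis using st chrC \<theta>mult by simp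
    qed
    have chrnorm: "norm (chr h) = 1" for h unfolding chr_def by (rule \<theta>norm)
    have chrcont: "continuous_on UNIV chr"
      unfolding continuous_on_closed_vimage[OF closed_UNIV]
    proof (intro allI impI)
      fix F :: "complex set" assume "closed F"
      have "chr -` F \<inter> UNIV = fst ` (C \<inter> (UNIV \<times> (\<theta> -` F)))"
      proof (intro set_eqI iffI)
        fix h assume "h \<in> chr -` F \<inter> UNIV"
        obtain t where t: "(h, t) \<in> C" using chrex by blast
        then have "\<theta> t \<in> F" using \<open>h \<in> chr -` F \<inter> UNIV\<close> chrC by simp
        then show "h \<in> fst ` (C \<inter> (UNIV \<times> (\<theta> -` F)))" using t by force
      next
        fix h assume "h \<in> fst ` (C \<inter> (UNIV \<times> (\<theta> -` F)))"
        then obtain t where "(h, t) \<in> C" "\<theta> t \<in> F" by force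
        then show "h \<in> chr -` F \<inter> UNIV" using chrC by simp
      qed
      moreover have "closed (C \<inter> (UNIV \<times> (\<theta> -` F)))"
        using clC closed_vimage[OF \<open>closed F\<close> \<theta>cont] by (intro closed_Int closed_Times) auto
      ultimately show "closed (chr -` F \<inter> UNIV)" using cmfst by simp
    qed
    define f where "f h = cnj (chr h)" for h
    have fchar: "f \<in> characters"
      unfolding characters_def f_def
      using continuous_on_cnj[OF chrcont] chrnorm chrmult by (simp add: complex_mod_cnj complex_cnj_mult)
    have annL: "cis (2 * pi * (\<xi> \<bullet> x)) * f h = 1" if xh: "(x, h) \<in> L" for x h
    proof -
      have "(star_map L x, \<psi> x) \<in> SS" unfolding SSmem using xh by force
      then have "(h, \<psi> x) \<in> C" using SSC SL2[OF xh] by auto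
      then have "chr h = cis (2 * pi * (\<xi> \<bullet> x))" using chrC \<theta>\<psi> by simp
      then have "f h = cis (- (2 * pi * (\<xi> \<bullet> x)))" by (simp add: f_def cis_cnj)
      then show ?thesis by (simp add: cis_mult)
    qed
    have "(\<xi>, f) \<in> annihilator L"
      unfolding annihilator_def using fchar annL by auto
    then have "\<xi> \<in> fst ` annihilator L" by (rule image_eqI[rotated]) simp
    then have "\<xi> \<in> dual_lattice D \<inter> fst ` annihilator L" using \<xi>dual by blast
    then show False using D2 \<xi>(1) by blast
  qed
  have denseL': "closure (snd ` L') = UNIV" using fullC unfolding C_def SS_def .
  have cpsL': "cut_and_project L'"
    unfolding cut_and_project_def using lcaG lcaHK sgL' discL' cocL' injL' denseL' by blast
  have sig: "sigma_compact_type TYPE('h \<times> 'k)" if "sigma_compact_type TYPE('h)"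
    using sig_prod[OF that cptK] .
  have met: "metrisable_type TYPE('h \<times> 'k)" if "metrisable_type TYPE('h)"
  proof -
    have "metrizable_space (euclidean :: 'h topology)" using that unfolding metrisable_type_def .
    moreover have "metrizable_space (euclidean :: 'k topology)" by (rule torus_metrizable[OF latD psi])
    ultimately have "metrizable_space (prod_topology (euclidean :: 'h topology) (euclidean :: 'k topology))"
      using metrizable_space_prod_topology[of "euclidean::'h topology" "euclidean::'k topology"] by blast
    then show ?thesis unfolding metrisable_type_def by simp
  qed
  show ?thesis using cpsL' starL' inj\<phi> model sig met by blast
qed


end
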